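(* Let $F\in\mathbb F_{I,E}(\beta,L)$ for a partition $I=(I_1,\dots,I_{|I|})\in\mathcal I$, $E\in\mathcal E_\eta$, with component smoothness indices $\beta_i$, and let $g$ satisfy Assumption G with $\ell=\max_i\lfloor\beta_i\rfloor$. Then for $\theta=(I,E,h)$ with $h=(h_1,\dots,h_d)\in[h_{\min},h_{\max}]^d$, $0<h_{\min}\le h_{\max}$, $$\|B_\theta\|_\infty\le L\sum_{i=1}^{|I|}\|g\|_1^{|I_i|}\sum_{j\in I_i}h_j^{\beta_i}.$$
   Context: $d\ge1$, $\mathcal D_0=[-1/2,1/2]^d$. Hölder ball $\mathbb H_s(\beta,L)$: functions $f:\mathbb R^s\to\mathbb R$ with continuous partial derivatives of all orders $\le l$, where $\beta=l+\alpha$, $l$ a nonnegative integer, $\alpha\in(0,1]$, such that $\|D^{\mathbf k}f\|_\infty\le L$ for $|\mathbf k|\le l$ and $|f(z)-\sum_{|\mathbf k|\le l}\frac{D^{\mathbf k}f(t)}{\mathbf k!}(z-t)^{\mathbf k}|\le L|z-t|^\beta$ for all $z,t$. $\mathcal I$ is the set of partitions of $\{1,\dots,d\}$; for fixed $\eta>0$, $\mathcal E_\eta=\{E=(e_1,\dots,e_d):e_i\in\mathbb S^{d-1},|\det E|\ge\eta\}$; $E_i$ is the matrix of columns $e_j$, $j\in I_i$. $\mathbb F_{I,E}(\beta,L)$ is the set of $F$ with $F(t)=\sum_{i=1}^{|I|}f_i(E_i^Tt)$, $f_i\in\mathbb H_{|I_i|}(\beta_i,L)$, $\beta=\beta_i/|I_i|$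 for all $i$. Assumption G: $g:[-1/2,1/2]\to\mathbb R$, $\int g=1$, $\int g(x)x^kdx=0$ for $k=1,\dots,\ell$, $g\in C^1$. $G_0(t)=\prod_{i=1}^dg(t_i)$, $G_{i,h}(t)=\prod_{j\in I_i}h_j^{-1}g(t_j/h_j)\prod_{j\notin I_i}g(t_j)$, $K_\theta(t)=|\det E|\sum_{i=1}^{|I|}G_{i,h}(E^Tt)-(|I|-1)|\det E|G_0(E^Tt)$. The bias is $B_\theta(x)=\int K_\theta(t-x)F(t)dt-F(x)$, $x\in\mathcal D_0$, and $\|\cdot\|_\infty$ is the sup over $\mathcal D_0$. *)

theory Defs
  imports "HOL-Analysis.Analysis"
begin

text \<open>The ambient space R^d is real^'n with d = CARD('n). A component f_i of
 a partition block A (a subset of coordinates, |A| = s) is a function on R^d that is only ever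
 evaluated on (and only constrained on) the coordinate subspace Vsub A, which is a copy of R^s.\<close>

definition Vsub :: "'n::finite set \<Rightarrow> (real^'n) set" where
  "Vsub A = {x. \<forall>j. j \<notin> A \<longrightarrow> x $ j = 0}"

definition pdir :: "'n::finite \<Rightarrow> (real^'n \<Rightarrow> real) \<Rightarrow> real^'n \<Rightarrow> real" where
  "pdir j f x = deriv (\<lambda>s. f (x + s *\<^sub>R axis j 1)) 0"

fun pds :: "'n::finite list \<Rightarrow> (real^'n \<Rightarrow> real) \<Rightarrow> real^'n \<Rightarrow> real" where
  "pds [] f = f"
| "pds (j # js) f = pdir j (pds js f)"

definition enum_idx :: "'n::finite list" where
  "enum_idx = (SOME xs. distinct xs \<and> set xs = UNIV)"

text \<open>Partial derivative D^k f for a multi-index k.\<close>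
definition Dmulti :: "('n::finite \<Rightarrow> nat) \<Rightarrow> (real^'n \<Rightarrow> real) \<Rightarrow> real^'n \<Rightarrow> real" where
  "Dmulti k f = pds (concat (map (\<lambda>j. replicate (k j) j) enum_idx)) f"

definition multi_idx :: "'n::finite set \<Rightarrow> nat \<Rightarrow> ('n \<Rightarrow> nat) set" where
  "multi_idx A l = {k. (\<forall>j. j \<notin> A \<longrightarrow> k j = 0) \<and> sum k UNIV \<le> l}"

text \<open>Hoelder ball H_s(beta,L), s = |A|, with beta = l + alpha, alpha in (0,1].\<close>
definition holder_ball :: "'n::finite set \<Rightarrow> real \<Rightarrow> real \<Rightarrow> (real^'n \<Rightarrow> real) \<Rightarrow> bool" where
  "holder_ball A \<beta> L f \<longleftrightarrow> \<beta> > 0 \<and>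
     (let l = nat (\<lceil>\<beta>\<rceil> - 1) in
       (\<forall>js. set js \<subseteq> A \<and> length js < l \<longrightarrow>
          (\<forall>j\<in>A. \<forall>x\<in>Vsub A. (\<lambda>s. pds js f (x + s *\<^sub>R axis j 1)) differentiable (at 0))) \<and>
       (\<forall>js. set js \<subseteq> A \<and> length js \<le> l \<longrightarrow> continuous_on (Vsub A) (pds js f)) \<and>
       (\<forall>k\<in>multi_idx A l. \<forall>x\<in>Vsub A. \<bar>Dmulti k f x\<bar> \<le> L) \<and>
       (\<forall>z\<in>Vsub A. \<forall>t\<in>Vsub A.
          \<bar>f z - (\<Sum>k\<in>multi_idx A l. Dmulti k f t / (\<Prod>j\<in>UNIV. fact (k j))
                    * (\<Prod>j\<in>UNIV. (z $ j - t $ j) ^ k j))\<bar> \<le> L * norm (z - t) powr \<beta>))"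

text \<open>Projection E_A^T t, placed in the coordinate subspace Vsub A.\<close>
definition projE :: "'n::finite set \<Rightarrow> real^'n^'n \<Rightarrow> real^'n \<Rightarrow> real^'n" where
  "projE A E t = (\<chi> j. if j \<in> A then (transpose E *v t) $ j else 0)"

text \<open>Assumption G; g is given on [-1/2,1/2] and extended by 0 outside.\<close>
definition assumption_G :: "(real \<Rightarrow> real) \<Rightarrow> nat \<Rightarrow> bool" where
  "assumption_G g ell \<longleftrightarrow>
     (\<forall>x. x \<notin> {-1/2..1/2} \<longrightarrow> g x = 0) \<and>
     integral {-1/2..1/2} g = 1 \<and>
     (\<forall>k\<in>{1..ell}. integral {-1/2..1/2} (\<lambda>x. g x * x ^ k) = 0) \<and>
     (\<exists>g'. continuous_on {-1/2..1/2} g' \<and>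
        (\<forall>x\<in>{-1/2..1/2}. (g has_real_derivative g' x) (at x within {-1/2..1/2})))"

definition l1norm :: "(real \<Rightarrow> real) \<Rightarrow> real" where
  "l1norm g = integral {-1/2..1/2} (\<lambda>x. \<bar>g x\<bar>)"

definition G0 :: "(real \<Rightarrow> real) \<Rightarrow> real^'n::finite \<Rightarrow> real" where
  "G0 g u = (\<Prod>j\<in>UNIV. g (u $ j))"

definition Gih :: "(real \<Rightarrow> real) \<Rightarrow> 'n::finite set \<Rightarrow> ('n \<Rightarrow> real) \<Rightarrow> real^'n \<Rightarrow> real" where
  "Gih g A h u = (\<Prod>j\<in>A. g (u $ j / h j) / h j) * (\<Prod>j\<in>UNIV - A. g (u $ j))"

definition Ktheta :: "(real \<Rightarrow> real) \<Rightarrow> 'n::finite set set \<Rightarrow> real^'n^'n \<Rightarrow> ('n \<Rightarrow> real) \<Rightarrow> real^'n \<Rightarrow> real" where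
  "Ktheta g P E h t =
     \<bar>det E\<bar> * (\<Sum>A\<in>P. Gih g A h (transpose E *v t))
     - (real (card P) - 1) * \<bar>det E\<bar> * G0 g (transpose E *v t)"

definition bias :: "(real \<Rightarrow> real) \<Rightarrow> 'n::finite set set \<Rightarrow> real^'n^'n \<Rightarrow> ('n \<Rightarrow> real)
     \<Rightarrow> (real^'n \<Rightarrow> real) \<Rightarrow> real^'n \<Rightarrow> real" where
  "bias g P E h F x = integral UNIV (\<lambda>t. Ktheta g P E h (t - x) * F t) - F x"

definition D0 :: "(real^'n::finite) set" where
  "D0 = {x. \<forall>j. \<bar>x $ j\<bar> \<le> 1/2}"

end

theory Submission
  imports Defs "HOL-Library.Countable"
begin

(* ---- part T1 ---- *)

typedef 'a wo = "UNIV :: 'a set" morphisms rep_wo Abs_wo by auto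
instantiation wo :: (countable) linorder begin
definition "less_eq_wo (x::'a::countable wo) (y::'a wo) \<longleftrightarrow> to_nat (rep_wo x) \<le> to_nat (rep_wo y)"
definition "less_wo (x::'a::countable wo) (y::'a wo) \<longleftrightarrow> to_nat (rep_wo x) < to_nat (rep_wo y)"
instance by standard (auto simp: less_eq_wo_def less_wo_def rep_wo_inject)
end
instance wo :: (countable) wellorder
proof
  fix P :: "'a wo \<Rightarrow> bool" and a :: "'a wo"
  assume H: "\<And>x. (\<And>y. y < x \<Longrightarrow> P y) \<Longrightarrow> P x"
  have "\<forall>x. to_nat (rep_wo x) = n \<longrightarrow> P x" for n
    by (induction n rule: less_induct) (metis H less_wo_def)
  then show "P a" by blast
qed
instance wo :: (finite) finite
proof
  have "(UNIV :: 'a wo set) = Abs_wo ` UNIV" by (metis UNIV_eq_I Abs_wo_cases image_eqI)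
  moreover have "finite (range (Abs_wo :: 'a \<Rightarrow> 'a wo))" by (rule finite_imageI) simp
  ultimately show "finite (UNIV :: 'a wo set)" by simp
qed

lemma absint_UNIV_iff:
  fixes f :: "'a::euclidean_space \<Rightarrow> real"
  assumes "f \<in> borel_measurable borel"
  shows "f absolutely_integrable_on UNIV \<longleftrightarrow> integrable lborel f"
  using assms by (simp add: set_integrable_def integrable_completion)

lemma cov_wo:
  fixes A :: "real^'m::{finite,wellorder}^'m::_" and f :: "real^'m::_ \<Rightarrow> real"
  assumes dA: "det A \<noteq> 0" and fm: "f \<in> borel_measurable borel" and fi: "integrable lborel f"
  shows "integrable lborel (\<lambda>x. f (A *v x)) \<and> (\<integral>x. f (A *v x) \<partial>lborel) * \<bar>det A\<bar> = (\<integral>x. f x \<partial>lborel)"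
proof -
  obtain B where AB: "A ** B = mat 1" "B ** A = mat 1"
    using dA invertible_det_nz invertible_def by blast
  have lin: "linear ((*v) A)" "linear ((*v) B)" by auto
  have mA: "(\<lambda>x. f (A *v x)) \<in> borel_measurable borel"
    using fm by (intro measurable_compose[OF borel_measurable_continuous_onI[OF linear_continuous_on[OF matrix_vector_mul_bounded_linear]]]) auto
  have "(\<lambda>x. \<bar>det (matrix ((*v) A))\<bar> * f ((*v) A x)) absolutely_integrable_on UNIV \<and>
           integral UNIV (\<lambda>x. \<bar>det (matrix ((*v) A))\<bar> * f ((*v) A x)) = integral UNIV f \<longleftrightarrow>
         f absolutely_integrable_on UNIV \<and> integral UNIV f = integral UNIV f"
    apply (rule cov_invertible_real[where h="(*v) B" and h'="\<lambda>_. (*v) B"])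
    using lin AB by (auto simp: linear_imp_has_derivative matrix_vector_mul_assoc o_def fun_eq_iff)
  then have *: "(\<lambda>x. \<bar>det A\<bar> * f (A *v x)) absolutely_integrable_on UNIV \<and>
           integral UNIV (\<lambda>x. \<bar>det A\<bar> * f (A *v x)) = integral UNIV f"
    using absint_UNIV_iff[OF fm] fi by auto
  have m2: "(\<lambda>x. \<bar>det A\<bar> * f (A *v x)) \<in> borel_measurable borel" using mA by measurable
  have i2: "integrable lborel (\<lambda>x. \<bar>det A\<bar> * f (A *v x))" using * m2 absint_UNIV_iff by blast
  then have i3: "integrable lborel (\<lambda>x. f (A *v x))"
    using dA by (simp add: integrable_mult_left_iff)
  have "(\<integral>x. \<bar>det A\<bar> * f (A *v x) \<partial>lborel) = (\<integral>x. f x \<partial>lborel)"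
    using * i2 i3 fi by (simp add: integral_lborel)
  then show ?thesis using i3 by (simp add: mult.commute)
qed
lemma rep_wo_Abs[simp]: "rep_wo (Abs_wo x) = x" by (simp add: Abs_wo_inverse)
lemma inj_rep_wo: "inj rep_wo" by (meson injI rep_wo_inject)
lemma inj_Abs_wo: "inj Abs_wo" by (metis injI rep_wo_Abs)
lemma surj_rep_wo: "surj rep_wo" by (metis surj_def rep_wo_Abs)
lemma surj_Abs_wo: "surj Abs_wo" by (metis surj_def rep_wo_inverse)

lemma prod_rep_wo: "(\<Prod>k\<in>UNIV. f k) = (\<Prod>i\<in>UNIV. f (rep_wo i))"
  by (metis (no_types) inj_rep_wo prod.reindex surj_rep_wo comp_apply prod.cong)

lemma sum_rep_wo: "(\<Sum>k\<in>UNIV. f k) = (\<Sum>i\<in>UNIV. f (rep_wo i))"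
  by (metis (no_types) inj_rep_wo sum.reindex surj_rep_wo comp_apply sum.cong)

definition wo_mat :: "real^'n::finite^'n \<Rightarrow> real^('n wo)^('n wo)" where
  "wo_mat A = (\<chi> p q. A $ rep_wo p $ rep_wo q)"

lemma conj_permutes:
  fixes p :: "'n::finite wo \<Rightarrow> 'n wo"
  assumes "p permutes UNIV" shows "(rep_wo \<circ> p \<circ> Abs_wo) permutes UNIV"
  using assms unfolding permutes_univ
  by (metis comp_apply rep_wo_Abs rep_wo_inverse)

lemma conj_permutes':
  fixes q :: "'n::finite \<Rightarrow> 'n"
  assumes "q permutes UNIV" shows "(Abs_wo \<circ> q \<circ> rep_wo) permutes UNIV"
  using assms unfolding permutes_univ
  by (metis comp_apply rep_wo_Abs rep_wo_inverse)

lemma sign_conj: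
  fixes p :: "'n::finite wo \<Rightarrow> 'n wo"
  assumes "p permutes UNIV" shows "sign (rep_wo \<circ> p \<circ> Abs_wo) = sign p"
proof -
  interpret permutes_bij_finite p UNIV UNIV rep_wo Abs_wo "\<lambda>x. if x \<in> UNIV then rep_wo (p (Abs_wo x)) else x"
    by unfold_locales (auto simp: assms bij_betw_def inj_rep_wo surj_rep_wo rep_wo_inverse)
  have "(\<lambda>x. if x \<in> UNIV then rep_wo (p (Abs_wo x)) else x) = rep_wo \<circ> p \<circ> Abs_wo" by auto
  then show ?thesis using sign_p' by simp
qed

lemma det_wo_mat: "det (wo_mat A) = det A"
  unfolding det_def
proof (rule sum.reindex_bij_witness[where j = "\<lambda>p. rep_wo \<circ> p \<circ> Abs_wo" and i = "\<lambda>q. Abs_wo \<circ> q \<circ> rep_wo"])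
  fix p :: "'a wo \<Rightarrow> 'a wo" assume p: "p \<in> {p. p permutes UNIV}"
  show "Abs_wo \<circ> (rep_wo \<circ> p \<circ> Abs_wo) \<circ> rep_wo = p" by (auto simp: fun_eq_iff rep_wo_inverse)
  show "rep_wo \<circ> p \<circ> Abs_wo \<in> {p. p permutes UNIV}" using p conj_permutes by auto
  have "(\<Prod>i\<in>UNIV. A $ i $ (rep_wo \<circ> p \<circ> Abs_wo) i) = (\<Prod>i\<in>UNIV. A $ rep_wo i $ (rep_wo \<circ> p \<circ> Abs_wo) (rep_wo i))"
    by (rule prod_rep_wo)
  then show "of_int (sign (rep_wo \<circ> p \<circ> Abs_wo)) * (\<Prod>i\<in>UNIV. A $ i $ (rep_wo \<circ> p \<circ> Abs_wo) i) =
         of_int (sign p) * (\<Prod>i\<in>UNIV. wo_mat A $ i $ p i)"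
    using p by (simp add: sign_conj wo_mat_def rep_wo_inverse)
next
  fix q :: "'a \<Rightarrow> 'a" assume q: "q \<in> {p. p permutes UNIV}"
  show "rep_wo \<circ> (Abs_wo \<circ> q \<circ> rep_wo) \<circ> Abs_wo = q" by (auto simp: fun_eq_iff)
  show "Abs_wo \<circ> q \<circ> rep_wo \<in> {p. p permutes UNIV}" using q conj_permutes' by auto
qed

definition wo_R :: "real^('n::finite wo) \<Rightarrow> real^'n" where "wo_R y = (\<chi> j. y $ Abs_wo j)"
definition wo_Ri :: "real^'n::finite \<Rightarrow> real^('n wo)" where "wo_Ri x = (\<chi> i. x $ rep_wo i)"

lemma wo_R_cont: "continuous_on UNIV wo_R"
  unfolding wo_R_def by (intro continuous_intros)

lemma wo_R_meas[measurable]: "wo_R \<in> borel_measurable borel"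
  by (rule borel_measurable_continuous_onI[OF wo_R_cont])

lemma prod_Basis_cart: "(\<Prod>b\<in>(Basis :: (real^'n::finite) set). x \<bullet> b) = (\<Prod>i\<in>UNIV. x $ i)"
  by (simp add: Basis_vec_def cart_eq_inner_axis axis_eq_axis prod.UNION_disjoint)

lemma Basis_le_cart: "(\<forall>b\<in>(Basis :: (real^'n::finite) set). l \<bullet> b \<le> u \<bullet> b) \<longleftrightarrow> (\<forall>i. l $ i \<le> u $ i)"
  by (auto simp: Basis_vec_def cart_eq_inner_axis)

lemma lborel_wo: "distr lborel borel wo_R = (lborel :: (real^'n::finite) measure)"
proof (rule lborel_eqI[symmetric])
  fix l u :: "real^'n" assume le: "\<And>b. b \<in> Basis \<Longrightarrow> l \<bullet> b \<le> u \<bullet> b"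
  have pre: "wo_R -` box l u \<inter> space lborel = box (wo_Ri l) (wo_Ri u)"
    apply (auto simp: mem_box_cart wo_R_def wo_Ri_def)
    by (metis rep_wo_Abs rep_wo_inverse)+
  have le2: "\<forall>i. wo_Ri l $ i \<le> wo_Ri u $ i" using le Basis_le_cart[of l u] by (simp add: wo_Ri_def)
  have "emeasure (distr lborel borel wo_R) (box l u) = emeasure lborel (box (wo_Ri l) (wo_Ri u))"
    using pre by (simp add: emeasure_distr)
  also have "\<dots> = (\<Prod>i\<in>UNIV. (wo_Ri u - wo_Ri l) $ i)"
    using le2 by (simp add: emeasure_lborel_box_eq Basis_le_cart prod_Basis_cart)
  also have "\<dots> = (\<Prod>i\<in>UNIV. (u - l) $ i)"
    using prod_rep_wo[of "\<lambda>i. u $ i - l $ i"] by (simp add: wo_Ri_def)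
  also have "\<dots> = (\<Prod>b\<in>Basis. (u - l) \<bullet> b)" by (simp add: prod_Basis_cart)
  finally show "emeasure (distr lborel borel wo_R) (box l u) = (\<Prod>b\<in>Basis. (u - l) \<bullet> b)" .
qed simp


lemma wo_R_mat: "A *v wo_R y = wo_R (wo_mat A *v y)"
  unfolding wo_R_def wo_mat_def
  by (simp add: vec_eq_iff matrix_vector_mult_def sum_rep_wo[where f="\<lambda>k. A $ _ $ k * y $ Abs_wo k"] rep_wo_inverse)

lemma lborel_transfer:
  fixes f :: "real^'n::finite \<Rightarrow> real"
  assumes [measurable]: "f \<in> borel_measurable borel"
  shows "integrable lborel f \<longleftrightarrow> integrable lborel (\<lambda>y. f (wo_R y))"
    and "(\<integral>x. f x \<partial>lborel) = (\<integral>y. f (wo_R y) \<partial>lborel)"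
  by (subst lborel_wo[symmetric], simp add: integrable_distr_eq integral_distr)+

lemma cov_lin:
  fixes A :: "real^'n::finite^'n" and f :: "real^'n \<Rightarrow> real"
  assumes dA: "det A \<noteq> 0" and fm[measurable]: "f \<in> borel_measurable borel" and fi: "integrable lborel f"
  shows "integrable lborel (\<lambda>x. f (A *v x)) \<and> (\<integral>x. f (A *v x) \<partial>lborel) * \<bar>det A\<bar> = (\<integral>x. f x \<partial>lborel)"
proof -
  have cA: "continuous_on UNIV ((*v) A)"
    by (rule linear_continuous_on[OF matrix_vector_mul_bounded_linear])
  have mA[measurable]: "(\<lambda>x. f (A *v x)) \<in> borel_measurable borel"
    using fm by (intro measurable_compose[OF borel_measurable_continuous_onI[OF cA]]) auto
  have m1: "(\<lambda>y. f (wo_R y)) \<in> borel_measurable borel" by measurable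
  have i1: "integrable lborel (\<lambda>y. f (wo_R y))" using fi lborel_transfer(1)[of f] by simp
  have "det (wo_mat A) \<noteq> 0" using dA by (simp add: det_wo_mat)
  from cov_wo[OF this m1 i1]
  have c: "integrable lborel (\<lambda>y. f (A *v wo_R y)) \<and>
      (\<integral>y. f (A *v wo_R y) \<partial>lborel) * \<bar>det A\<bar> = (\<integral>y. f (wo_R y) \<partial>lborel)"
    by (simp add: wo_R_mat det_wo_mat)
  then show ?thesis
    using lborel_transfer[OF mA] lborel_transfer[OF fm] by simp
qed


definition vecP :: "('n::finite \<Rightarrow> real) \<Rightarrow> real^'n" where
  "vecP u = (\<Sum>j\<in>UNIV. u j *\<^sub>R axis j 1)"

lemma vecP_nth[simp]: "vecP u $ i = u i"
  by (simp add: vecP_def sum_component axis_def if_distrib[where f="\<lambda>z. _ * z"] cong: if_cong)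

lemma vecP_meas[measurable]: "vecP \<in> borel_measurable (PiM UNIV (\<lambda>_::'n::finite. lborel))"
  unfolding vecP_def by measurable

interpretation PL: product_sigma_finite "\<lambda>_. lborel"
  by (simp add: product_sigma_finite_def lborel.sigma_finite_measure_axioms)

lemma lborel_PiM: "distr (PiM UNIV (\<lambda>_::'n::finite. lborel)) borel vecP = (lborel :: (real^'n) measure)"
proof (rule lborel_eqI[symmetric])
  fix l u :: "real^'n" assume le: "\<And>b. b \<in> Basis \<Longrightarrow> l \<bullet> b \<le> u \<bullet> b"
  have pre: "vecP -` box l u \<inter> space (PiM UNIV (\<lambda>_::'n. lborel)) = PiE UNIV (\<lambda>j. {l$j<..<u$j})"
    by (auto simp: mem_box_cart space_PiM PiE_def Pi_def extensional_def)
  have le2: "\<forall>i. l $ i \<le> u $ i" using le Basis_le_cart[of l u] by simp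
  have "emeasure (distr (PiM UNIV (\<lambda>_::'n. lborel)) borel vecP) (box l u) = emeasure (PiM UNIV (\<lambda>_::'n. lborel)) (PiE UNIV (\<lambda>j. {l$j<..<u$j}))"
    using pre by (simp add: emeasure_distr)
  also have "\<dots> = (\<Prod>i\<in>UNIV. emeasure lborel {l$i<..<u$i})"
    by (rule PL.emeasure_PiM) auto
  also have "\<dots> = (\<Prod>i\<in>UNIV. ennreal (u$i - l$i))"
    using le2 by simp
  also have "\<dots> = ennreal (\<Prod>i\<in>UNIV. (u - l) $ i)"
    using le2 by (simp add: prod_ennreal)
  also have "\<dots> = (\<Prod>b\<in>Basis. (u - l) \<bullet> b)" by (simp add: prod_Basis_cart)
  finally show "emeasure (distr (PiM UNIV (\<lambda>_::'n. lborel)) borel vecP) (box l u) = (\<Prod>b\<in>Basis. (u - l) \<bullet> b)" .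
qed simp


(* ---- part T2 ---- *)


lemma abs_integral_le:
  fixes f b :: "'a \<Rightarrow> real"
  assumes "integrable M b" "\<And>x. x \<in> space M \<Longrightarrow> \<bar>f x\<bar> \<le> b x"
  shows "\<bar>\<integral>x. f x \<partial>M\<bar> \<le> (\<integral>x. b x \<partial>M)"
proof -
  have "\<bar>\<integral>x. f x \<partial>M\<bar> \<le> (\<integral>x. \<bar>f x\<bar> \<partial>M)"
    using integral_norm_bound[of M f] by simp
  also have "\<dots> \<le> (\<integral>x. b x \<partial>M)"
    using assms by (intro integral_mono') (auto intro: order_trans[OF abs_ge_zero])
  finally show ?thesis .
qed

lemma int_bound:
  fixes w \<phi> :: "'a \<Rightarrow> real"
  assumes "integrable M w" "\<phi> \<in> borel_measurable M"
    and "\<And>x. x \<in> space M \<Longrightarrow> w x \<noteq> 0 \<Longrightarrow> \<bar>\<phi> x\<bar> \<le> C"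
  shows "integrable M (\<lambda>x. w x * \<phi> x)"
proof (rule Bochner_Integration.integrable_bound[where f="\<lambda>x. C * w x"])
  show "integrable M (\<lambda>x. C * w x)" using assms(1) by simp
  show "(\<lambda>x. w x * \<phi> x) \<in> borel_measurable M"
    using assms(1,2) by (intro borel_measurable_times) auto
  show "AE x in M. norm (w x * \<phi> x) \<le> norm (C * w x)"
  proof (rule AE_I2)
    fix x assume x: "x \<in> space M"
    show "norm (w x * \<phi> x) \<le> norm (C * w x)"
    proof (cases "w x = 0")
      case False
      then have "\<bar>\<phi> x\<bar> \<le> C" using assms(3) x by auto
      then have "\<bar>w x\<bar> * \<bar>\<phi> x\<bar> \<le> \<bar>w x\<bar> * \<bar>C\<bar>" by (intro mult_left_mono) auto
      then show ?thesis by (simp add: abs_mult mult.commute)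
    qed simp
  qed
qed

definition Ihalf :: "real set" where "Ihalf = {-1/2..1/2}"

lemma G_facts:
  assumes G: "assumption_G g ell"
  shows G_zero: "\<And>x. x \<notin> {-1/2..1/2} \<Longrightarrow> g x = 0"
    and G_cont: "continuous_on {-1/2..1/2} g"
    and G_ind: "\<And>x. g x = indicator {-1/2..1/2::real} x *\<^sub>R g x"
proof -
  show z: "\<And>x. x \<notin> {-1/2..1/2} \<Longrightarrow> g x = 0" using G by (auto simp: assumption_G_def)
  obtain g' where "\<forall>x\<in>{-1/2..1/2}. (g has_real_derivative g' x) (at x within {-1/2..1/2})"
    using G by (auto simp: assumption_G_def)
  then show "continuous_on {-1/2..1/2} g" by (intro DERIV_continuous_on) auto
  show "\<And>x. g x = indicator {-1/2..1/2::real} x *\<^sub>R g x"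
    using z by (auto simp: indicator_def)
qed

lemma G_meas: "assumption_G g ell \<Longrightarrow> g \<in> borel_measurable borel"
proof -
  assume G: "assumption_G g ell"
  have "(\<lambda>x. indicator {-1/2..1/2::real} x *\<^sub>R g x) \<in> borel_measurable borel"
    by (rule borel_measurable_continuous_on_indicator) (use G_cont[OF G] in auto)
  moreover have "(\<lambda>x. indicator {-1/2..1/2::real} x *\<^sub>R g x) = g"
    using G_ind[OF G] by (auto simp: fun_eq_iff)
  ultimately show ?thesis by simp
qed

lemma G_int_pow: "assumption_G g ell \<Longrightarrow> integrable lborel (\<lambda>x. g x * x ^ k)"
proof -
  assume G: "assumption_G g ell"
  have "integrable lborel (\<lambda>x. indicator {-1/2..1/2::real} x *\<^sub>R (g x * x ^ k))"
    by (rule borel_integrable_compact) (use G_cont[OF G] in \<open>auto intro!: continuous_intros\<close>)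
  moreover have "(\<lambda>x. indicator {-1/2..1/2::real} x *\<^sub>R (g x * x ^ k)) = (\<lambda>x. g x * x ^ k)"
    using G_zero[OF G] by (auto simp: indicator_def fun_eq_iff)
  ultimately show ?thesis by simp
qed

lemma G_int_abs: "assumption_G g ell \<Longrightarrow> integrable lborel (\<lambda>x. \<bar>g x\<bar>)"
  using G_int_pow[of g ell 0] by simp

lemma lborel_HK_half:
  fixes \<phi> :: "real \<Rightarrow> real"
  assumes "integrable lborel \<phi>" "\<And>x. x \<notin> {-1/2..1/2} \<Longrightarrow> \<phi> x = 0"
  shows "(\<integral>x. \<phi> x \<partial>lborel) = integral {-1/2..1/2} \<phi>"
proof -
  have "(\<integral>x. \<phi> x \<partial>lborel) = integral UNIV \<phi>" using integral_lborel[OF assms(1)] by simp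
  also have "integral UNIV \<phi> = integral UNIV (\<lambda>x. if x \<in> {-1/2..1/2} then \<phi> x else 0)"
    using assms(2) by (intro arg_cong[where f="integral UNIV"]) auto
  also have "\<dots> = integral {-1/2..1/2} \<phi>" by (rule integral_restrict_UNIV)
  finally show ?thesis .
qed

lemma G_moments:
  assumes G: "assumption_G g ell"
  shows G_int1: "(\<integral>x. g x \<partial>lborel) = 1"
    and G_mom: "\<And>k. k \<in> {1..ell} \<Longrightarrow> (\<integral>x. g x * x ^ k \<partial>lborel) = 0"
    and G_l1: "(\<integral>x. \<bar>g x\<bar> \<partial>lborel) = l1norm g"
proof -
  show "(\<integral>x. g x \<partial>lborel) = 1"
    using lborel_HK_half[of g] G_int_pow[OF G, of 0] G_zero[OF G] G by (simp add: assumption_G_def)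
  show "\<And>k. k \<in> {1..ell} \<Longrightarrow> (\<integral>x. g x * x ^ k \<partial>lborel) = 0"
    using lborel_HK_half[of "\<lambda>x. g x * x ^ _"] G_int_pow[OF G] G_zero[OF G] G by (simp add: assumption_G_def)
  show "(\<integral>x. \<bar>g x\<bar> \<partial>lborel) = l1norm g"
    using lborel_HK_half[of "\<lambda>x. \<bar>g x\<bar>"] G_int_abs[OF G] G_zero[OF G] by (simp add: l1norm_def)
qed

lemma G_l1_ge1: "assumption_G g ell \<Longrightarrow> 1 \<le> l1norm g"
proof -
  assume G: "assumption_G g ell"
  have "1 = \<bar>\<integral>x. g x \<partial>lborel\<bar>" using G_int1[OF G] by simp
  also have "\<dots> \<le> (\<integral>x. \<bar>g x\<bar> \<partial>lborel)" using integral_norm_bound[of lborel g] by simp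
  finally show ?thesis using G_l1[OF G] by simp
qed

text \<open>Scaling\<close>
lemma scale_integral:
  fixes \<psi> :: "real \<Rightarrow> real" assumes h: "h > 0"
  shows "integrable lborel (\<lambda>s. \<psi> (s / h) / h) \<longleftrightarrow> integrable lborel \<psi>"
    and "(\<integral>s. \<psi> (s / h) / h \<partial>lborel) = (\<integral>x. \<psi> x \<partial>lborel)"
proof -
  have e: "(\<lambda>x. (\<lambda>s. \<psi> (s / h) / h) (0 + h * x)) = (\<lambda>x. \<psi> x / h)" using h by auto
  have d: "integrable lborel (\<lambda>x. \<psi> x / h) \<longleftrightarrow> integrable lborel \<psi>"
    using integrable_mult_right_iff[of lborel \<psi> "1/h"] h by simp
  show "integrable lborel (\<lambda>s. \<psi> (s / h) / h) \<longleftrightarrow> integrable lborel \<psi>"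
    using lborel_integrable_real_affine_iff[of h "\<lambda>s. \<psi> (s / h) / h" 0] h e d by simp
  show "(\<integral>s. \<psi> (s / h) / h \<partial>lborel) = (\<integral>x. \<psi> x \<partial>lborel)"
    using lborel_integral_real_affine[of h "\<lambda>s. \<psi> (s / h) / h" 0] h e by simp
qed

definition gs :: "(real \<Rightarrow> real) \<Rightarrow> real \<Rightarrow> real \<Rightarrow> real" where
  "gs g h s = g (s / h) / h"

lemma GS_facts:
  assumes G: "assumption_G g ell" and h: "h > 0"
  shows GS_meas: "gs g h \<in> borel_measurable borel"
    and GS_int_pow: "integrable lborel (\<lambda>s. gs g h s * s ^ k)"
    and GS_int_abs: "integrable lborel (\<lambda>s. \<bar>gs g h s\<bar>)"
    and GS_int1: "(\<integral>s. gs g h s \<partial>lborel) = 1"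
    and GS_mom: "k \<in> {1..ell} \<Longrightarrow> (\<integral>s. gs g h s * s ^ k \<partial>lborel) = 0"
    and GS_l1: "(\<integral>s. \<bar>gs g h s\<bar> \<partial>lborel) = l1norm g"
    and GS_zero: "\<bar>s\<bar> > h / 2 \<Longrightarrow> gs g h s = 0"
proof -
  note gm[measurable] = G_meas[OF G]
  show "gs g h \<in> borel_measurable borel" unfolding gs_def[abs_def] by measurable
  have e1: "(\<lambda>s. gs g h s * s ^ k) = (\<lambda>s. (\<lambda>x. g x * (h * x) ^ k) (s / h) / h)"
    using h by (auto simp: gs_def fun_eq_iff)
  have "integrable lborel (\<lambda>x. g x * (h * x) ^ k)"
  proof -
    have "integrable lborel (\<lambda>x. h ^ k * (g x * x ^ k))" using G_int_pow[OF G, of k] by simp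
    then show ?thesis by (simp add: power_mult_distrib mult.left_commute)
  qed
  then show "integrable lborel (\<lambda>s. gs g h s * s ^ k)"
    unfolding e1 using scale_integral(1)[OF h, of "\<lambda>x. g x * (h * x) ^ k"] by blast
  have e2: "(\<lambda>s. \<bar>gs g h s\<bar>) = (\<lambda>s. (\<lambda>x. \<bar>g x\<bar>) (s / h) / h)"
    using h by (auto simp: gs_def fun_eq_iff)
  show "integrable lborel (\<lambda>s. \<bar>gs g h s\<bar>)"
    unfolding e2 using scale_integral(1)[OF h, of "\<lambda>x. \<bar>g x\<bar>"] G_int_abs[OF G] by simp
  show "(\<integral>s. \<bar>gs g h s\<bar> \<partial>lborel) = l1norm g"
    unfolding e2 using scale_integral(2)[OF h, of "\<lambda>x. \<bar>g x\<bar>"] G_l1[OF G] by simp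
  have e3: "gs g h = (\<lambda>s. g (s / h) / h)" by (simp add: gs_def fun_eq_iff)
  show "(\<integral>s. gs g h s \<partial>lborel) = 1"
    unfolding e3 using scale_integral(2)[OF h, of g] G_int1[OF G] by simp
  assume k: "k \<in> {1..ell}"
  have "(\<integral>s. gs g h s * s ^ k \<partial>lborel) = (\<integral>x. g x * (h * x) ^ k \<partial>lborel)"
    unfolding e1 using scale_integral(2)[OF h, of "\<lambda>x. g x * (h * x) ^ k"] by simp
  also have "\<dots> = (\<integral>x. h ^ k * (g x * x ^ k) \<partial>lborel)"
    by (simp add: power_mult_distrib mult.left_commute)
  also have "\<dots> = h ^ k * (\<integral>x. g x * x ^ k \<partial>lborel)"
    by (rule integral_mult_right_zero)
  also have "\<dots> = 0" using G_mom[OF G k] by simp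
  finally show "(\<integral>s. gs g h s * s ^ k \<partial>lborel) = 0" .
next
  assume "\<bar>s\<bar> > h / 2"
  then have "s / h \<notin> {-1/2..1/2}" using h by (auto simp: field_simps abs_if split: if_splits)
  then show "gs g h s = 0" using G_zero[OF G] by (simp add: gs_def)
qed


(* ---- part T3 ---- *)


definition projB :: "'n::finite set \<Rightarrow> real^'n \<Rightarrow> real^'n" where
  "projB B v = (\<chi> j. if j \<in> B then v $ j else 0)"

lemma projB_Vsub: "projB B v \<in> Vsub B"
  by (simp add: projB_def Vsub_def)

lemma projB_in: "i \<in> B \<Longrightarrow> projB B (v + s *\<^sub>R axis i 1) = projB B v + s *\<^sub>R axis i 1"
  by (auto simp: projB_def vec_eq_iff axis_def)

lemma projB_out: "i \<notin> B \<Longrightarrow> projB B (v + s *\<^sub>R axis i 1) = projB B v"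
  by (auto simp: projB_def vec_eq_iff axis_def)

lemma projB_cont: "continuous_on UNIV (projB B)"
  unfolding projB_def
  apply (intro continuous_on_vec_lambda)
  subgoal for j by (cases "j \<in> B") (auto intro: continuous_intros)
  done

lemma Vsub_add_axis: "t \<in> Vsub B \<Longrightarrow> i \<in> B \<Longrightarrow> t + s *\<^sub>R axis i 1 \<in> Vsub B"
  by (auto simp: Vsub_def axis_def)

lemma Dmulti_zero: "Dmulti (\<lambda>_. 0) f = f"
proof -
  have *: "\<And>xs. concat (map (\<lambda>j. []) xs) = []" by (induct_tac xs) auto
  show ?thesis by (simp add: Dmulti_def *)
qed

lemma finite_multi_idx: "finite (multi_idx A l)"
proof -
  have "multi_idx A l \<subseteq> (\<Pi>\<^sub>E i\<in>UNIV. {0..l})"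
  proof
    fix k assume k: "k \<in> multi_idx A l"
    have "k i \<le> l" for i
      using k member_le_sum[of i UNIV k] by (auto simp: multi_idx_def)
    then show "k \<in> (\<Pi>\<^sub>E i\<in>UNIV. {0..l})" by auto
  qed
  moreover have "finite (\<Pi>\<^sub>E i\<in>(UNIV::'a set). {0..l})" by (intro finite_PiE) auto
  ultimately show ?thesis by (rule finite_subset)
qed

lemma holder_facts:
  assumes "holder_ball A \<beta> L f"
  shows hol_pos: "\<beta> > 0"
    and hol_cont: "continuous_on (Vsub A) f"
    and hol_L: "L \<ge> 0"
    and hol_taylor: "\<And>z t. z \<in> Vsub A \<Longrightarrow> t \<in> Vsub A \<Longrightarrow>
          \<bar>f z - (\<Sum>k\<in>multi_idx A (nat (\<lceil>\<beta>\<rceil> - 1)). Dmulti k f t / (\<Prod>j\<in>UNIV. fact (k j))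
                    * (\<Prod>j\<in>UNIV. (z $ j - t $ j) ^ k j))\<bar> \<le> L * norm (z - t) powr \<beta>"
proof -
  note h = assms[unfolded holder_ball_def Let_def]
  show "\<beta> > 0" using h by blast
  have "\<forall>js. set js \<subseteq> A \<and> length js \<le> nat (\<lceil>\<beta>\<rceil> - 1) \<longrightarrow> continuous_on (Vsub A) (pds js f)"
    using h by blast
  then have "continuous_on (Vsub A) (pds [] f)" by (metis empty_subsetI list.set(1) list.size(3) zero_le)
  then show "continuous_on (Vsub A) f" by simp
  have z0: "(\<lambda>_. 0) \<in> multi_idx A (nat (\<lceil>\<beta>\<rceil> - 1))" by (simp add: multi_idx_def)
  have "0 \<in> Vsub A" by (simp add: Vsub_def)
  then have "\<bar>Dmulti (\<lambda>_. 0) f 0\<bar> \<le> L" using h z0 by blast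
  then show "L \<ge> 0" by linarith
  show "\<And>z t. z \<in> Vsub A \<Longrightarrow> t \<in> Vsub A \<Longrightarrow>
          \<bar>f z - (\<Sum>k\<in>multi_idx A (nat (\<lceil>\<beta>\<rceil> - 1)). Dmulti k f t / (\<Prod>j\<in>UNIV. fact (k j))
                    * (\<Prod>j\<in>UNIV. (z $ j - t $ j) ^ k j))\<bar> \<le> L * norm (z - t) powr \<beta>"
    using h by blast
qed

lemma prod_axis_pow:
  "(\<Prod>j\<in>UNIV. ((s *\<^sub>R axis i (1::real)) $ j) ^ k j) = (if \<forall>j. j \<noteq> i \<longrightarrow> k j = 0 then s ^ k i else 0)"
proof (cases "\<forall>j. j \<noteq> i \<longrightarrow> k j = 0")
  case True
  have "(\<Prod>j\<in>UNIV. ((s *\<^sub>R axis i (1::real)) $ j) ^ k j) = (\<Prod>j\<in>UNIV. if j = i then s ^ k i else 1)"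
    using True by (intro prod.cong) (auto simp: axis_def)
  also have "\<dots> = s ^ k i" by simp
  finally show ?thesis using True by simp
next
  case False
  then obtain j where j: "j \<noteq> i" "k j \<noteq> 0" by auto
  have "((s *\<^sub>R axis i (1::real)) $ j) ^ k j = 0" using j by (simp add: axis_def)
  then have "(\<Prod>j\<in>UNIV. ((s *\<^sub>R axis i (1::real)) $ j) ^ k j) = 0"
    using prod_zero[of UNIV "\<lambda>j. ((s *\<^sub>R axis i (1::real)) $ j) ^ k j"] by auto
  then show ?thesis by (subst if_not_P[OF False])
qed

lemma cont_bounded_on:
  fixes \<phi> :: "'a::metric_space \<Rightarrow> real"
  assumes "continuous_on UNIV \<phi>" "compact K"
  obtains C where "\<And>x. x \<in> K \<Longrightarrow> \<bar>\<phi> x\<bar> \<le> C"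
proof -
  have "compact (\<phi> ` K)" using assms by (intro compact_continuous_image) (auto intro: continuous_on_subset)
  then have "bounded (\<phi> ` K)" by (rule compact_imp_bounded)
  then obtain C where C: "\<And>y. y \<in> \<phi> ` K \<Longrightarrow> norm y \<le> C" by (auto simp: bounded_iff)
  have "\<And>x. x \<in> K \<Longrightarrow> \<bar>\<phi> x\<bar> \<le> C" using C by fastforce
  then show ?thesis by (rule that)
qed

lemma taylor_step:
  assumes hol: "holder_ball B \<beta> L f" and iB: "i \<in> B" and h: "h > 0"
    and G: "assumption_G g ell" and lell: "nat (\<lceil>\<beta>\<rceil> - 1) \<le> ell"
  shows "integrable lborel (\<lambda>s. gs g h s * f (projB B (v + s *\<^sub>R axis i 1)))"
    and "\<bar>(\<integral>s. gs g h s * f (projB B (v + s *\<^sub>R axis i 1)) \<partial>lborel) - f (projB B v)\<bar>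
           \<le> l1norm g * (L * h powr \<beta>)"
proof -
  define t where "t = projB B v"
  have tV: "t \<in> Vsub B" by (simp add: t_def projB_Vsub)
  define z where "z s = t + s *\<^sub>R axis i 1" for s
  have zV: "z s \<in> Vsub B" for s using tV iB by (simp add: z_def Vsub_add_axis)
  have pz: "projB B (v + s *\<^sub>R axis i 1) = z s" for s by (simp add: z_def t_def projB_in[OF iB])
  define l where "l = nat (\<lceil>\<beta>\<rceil> - 1)"
  define MI where "MI = multi_idx B l"
  have fMI: "finite MI" by (simp add: MI_def finite_multi_idx)
  have z0: "(\<lambda>_. 0) \<in> MI" by (simp add: MI_def multi_idx_def)
  define c where "c k = Dmulti k f t / (\<Prod>j\<in>UNIV. fact (k j))" for k
  define T where "T s = (\<Sum>k\<in>MI. c k * (\<Prod>j\<in>UNIV. (z s $ j - t $ j) ^ k j))" for s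
  have zt: "z s $ j - t $ j = (s *\<^sub>R axis i (1::real)) $ j" for s j by (simp add: z_def)
  define e where "e k s = (if \<forall>j. j \<noteq> i \<longrightarrow> k j = 0 then s ^ k i else 0)" for k and s :: real
  have Te: "T s = (\<Sum>k\<in>MI. c k * e k s)" for s
    unfolding T_def e_def zt prod_axis_pow ..
  note gm[measurable] = GS_meas[OF G h]
  have ek: "integrable lborel (\<lambda>s. gs g h s * e k s) \<and>
      (\<integral>s. gs g h s * e k s \<partial>lborel) = (if k = (\<lambda>_. 0) then 1 else 0)" if k: "k \<in> MI" for k
  proof (cases "\<forall>j. j \<noteq> i \<longrightarrow> k j = 0")
    case True
    have "k i \<le> sum k UNIV" by (rule member_le_sum) auto
    then have kl: "k i \<le> ell" using k lell by (auto simp: MI_def multi_idx_def l_def)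
    show ?thesis
    proof (cases "k i = 0")
      case True
      with \<open>\<forall>j. j \<noteq> i \<longrightarrow> k j = 0\<close> have "k = (\<lambda>_. 0)" by (intro ext) metis
      then show ?thesis using GS_int_pow[OF G h, of 0] GS_int1[OF G h] by (simp add: e_def)
    next
      case False
      then have "k \<noteq> (\<lambda>_. 0)" by auto
      then show ?thesis using GS_int_pow[OF G h, of "k i"] GS_mom[OF G h, of "k i"] False kl True
        by (simp add: e_def)
    qed
  next
    case False
    then have "k \<noteq> (\<lambda>_. 0)" by auto
    then show ?thesis unfolding e_def if_not_P[OF False] by simp
  qed
  have intT: "integrable lborel (\<lambda>s. gs g h s * T s)"
  proof -
    have "integrable lborel (\<lambda>s. \<Sum>k\<in>MI. c k * (gs g h s * e k s))"
      by (rule Bochner_Integration.integrable_sum) (use ek in simp)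
    then show ?thesis by (simp add: Te sum_distrib_left mult.left_commute)
  qed
  have intT_val: "(\<integral>s. gs g h s * T s \<partial>lborel) = f t"
  proof -
    have "(\<integral>s. gs g h s * T s \<partial>lborel) = (\<integral>s. (\<Sum>k\<in>MI. c k * (gs g h s * e k s)) \<partial>lborel)"
      by (simp add: Te sum_distrib_left mult.left_commute)
    also have "\<dots> = (\<Sum>k\<in>MI. c k * (\<integral>s. gs g h s * e k s \<partial>lborel))"
      by (subst Bochner_Integration.integral_sum) (use ek in simp_all)
    also have "\<dots> = (\<Sum>k\<in>MI. c k * (if k = (\<lambda>_. 0) then 1 else 0))"
      using ek by (intro sum.cong) auto
    also have "\<dots> = c (\<lambda>_. 0)" using fMI z0 by (simp add: if_distrib cong: if_cong)
    also have "\<dots> = f t" by (simp add: c_def Dmulti_zero)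
    finally show ?thesis .
  qed
  have fcont: "continuous_on UNIV (\<lambda>s. f (z s))"
    unfolding z_def
    by (rule continuous_on_compose2[OF hol_cont[OF hol]]) (use zV[unfolded z_def] in \<open>auto intro!: continuous_intros\<close>)
  have fzm[measurable]: "(\<lambda>s. f (z s)) \<in> borel_measurable borel"
    by (rule borel_measurable_continuous_onI[OF fcont])
  obtain C where C: "\<And>s. s \<in> {-h..h} \<Longrightarrow> \<bar>f (z s)\<bar> \<le> C"
    using cont_bounded_on[OF fcont, of "{-h..h}"] by auto
  have intF: "integrable lborel (\<lambda>s. gs g h s * f (z s))"
  proof (rule int_bound[where C=C])
    show "integrable lborel (gs g h)" using GS_int_pow[OF G h, of 0] by simp
    fix s assume "gs g h s \<noteq> 0"
    then have "\<bar>s\<bar> \<le> h / 2" using GS_zero[OF G h, of s] by force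
    then have "s \<in> {-h..h}" using h by (auto simp: abs_if split: if_splits)
    then show "\<bar>f (z s)\<bar> \<le> C" using C by blast
  qed simp
  then show "integrable lborel (\<lambda>s. gs g h s * f (projB B (v + s *\<^sub>R axis i 1)))" by (simp add: pz)
  have "(\<integral>s. gs g h s * f (projB B (v + s *\<^sub>R axis i 1)) \<partial>lborel) - f (projB B v)
      = (\<integral>s. gs g h s * (f (z s) - T s) \<partial>lborel)"
    using intF intT intT_val by (simp add: pz t_def[symmetric] right_diff_distrib)
  also have "\<bar>\<dots>\<bar> \<le> (\<integral>s. \<bar>gs g h s\<bar> * (L * h powr \<beta>) \<partial>lborel)"
  proof (rule abs_integral_le)
    show "integrable lborel (\<lambda>s. \<bar>gs g h s\<bar> * (L * h powr \<beta>))"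
      using GS_int_abs[OF G h] by simp
    fix s
    show "\<bar>gs g h s * (f (z s) - T s)\<bar> \<le> \<bar>gs g h s\<bar> * (L * h powr \<beta>)"
    proof (cases "gs g h s = 0")
      case False
      then have sh: "\<bar>s\<bar> \<le> h" using GS_zero[OF G h, of s] h by force
      have "\<bar>f (z s) - T s\<bar> \<le> L * norm (z s - t) powr \<beta>"
        using hol_taylor[OF hol zV tV] by (simp add: T_def c_def MI_def l_def)
      also have "norm (z s - t) = \<bar>s\<bar>" by (simp add: z_def)
      also have "L * \<bar>s\<bar> powr \<beta> \<le> L * h powr \<beta>"
        using sh hol_L[OF hol] hol_pos[OF hol]
        by (intro mult_left_mono powr_mono2) auto
      finally show ?thesis by (simp add: abs_mult mult_left_mono)
    qed simp
  qed
  also have "\<dots> = l1norm g * (L * h powr \<beta>)"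
    using GS_l1[OF G h] by simp
  finally show "\<bar>(\<integral>s. gs g h s * f (projB B (v + s *\<^sub>R axis i 1)) \<partial>lborel) - f (projB B v)\<bar>
           \<le> l1norm g * (L * h powr \<beta>)" .
qed


(* ---- part T4 ---- *)


lemma (in product_sigma_finite) product_integrable_insert':
  fixes f :: "_ \<Rightarrow> real"
  assumes I: "finite I" "i \<notin> I" and f: "integrable (Pi\<^sub>M (insert i I) M) f"
  shows "integrable (Pi\<^sub>M I M) (\<lambda>x. \<integral>y. f (x(i:=y)) \<partial>M i)"
proof -
  interpret I: finite_product_sigma_finite M I by standard fact
  interpret i: finite_product_sigma_finite M "{i}" by standard simp
  interpret P: pair_sigma_finite "Pi\<^sub>M I M" "Pi\<^sub>M {i} M" ..
  have IJ: "I \<inter> {i} = {}" using I by auto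
  have ins: "insert i I = I \<union> {i}" by auto
  have f_borel: "f \<in> borel_measurable (Pi\<^sub>M (insert i I) M)" by (rule borel_measurable_integrable[OF f])
  have fint: "integrable (Pi\<^sub>M I M \<Otimes>\<^sub>M Pi\<^sub>M {i} M) (\<lambda>x. f (merge I {i} x))"
  proof (rule integrable_distr[OF measurable_merge])
    have d: "distr (Pi\<^sub>M I M \<Otimes>\<^sub>M Pi\<^sub>M {i} M) (Pi\<^sub>M (I \<union> {i}) M) (merge I {i}) = Pi\<^sub>M (I \<union> {i}) M"
      by (rule distr_merge) (use I in auto)
    have f': "integrable (Pi\<^sub>M (I \<union> {i}) M) f" using f unfolding ins .
    show "integrable (distr (Pi\<^sub>M I M \<Otimes>\<^sub>M Pi\<^sub>M {i} M) (Pi\<^sub>M (I \<union> {i}) M) (merge I {i})) f"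
      by (simp only: d f')
  qed
  then have intf: "integrable (Pi\<^sub>M I M) (\<lambda>x. \<integral>y. f (merge I {i} (x, y)) \<partial>Pi\<^sub>M {i} M)"
    by (rule P.integrable_fst')
  have eqx: "(\<integral>y. f (merge I {i} (x, y)) \<partial>Pi\<^sub>M {i} M) = (\<integral>y. f (x(i:=y)) \<partial>M i)"
    if x: "x \<in> space (Pi\<^sub>M I M)" for x
  proof -
    have m: "(\<lambda>y. f (x(i := y))) \<in> borel_measurable (M i)"
      using measurable_comp[OF measurable_component_update f_borel, OF x \<open>i \<notin> I\<close>]
      unfolding comp_def .
    have "(\<integral>y. f (merge I {i} (x, y)) \<partial>Pi\<^sub>M {i} M) = (\<integral>y. f (x(i := y i)) \<partial>Pi\<^sub>M {i} M)"
    proof (rule Bochner_Integration.integral_cong[OF refl])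
      fix y assume y: "y \<in> space (Pi\<^sub>M {i} M)"
      have "merge I {i} (x, y) = x(i := y i)"
      proof
        fix ia show "merge I {i} (x, y) ia = (x(i := y i)) ia"
          using x y I by (cases "ia \<in> I"; cases "ia = i") (auto simp: merge_def space_PiM PiE_def extensional_def)
      qed
      then show "f (merge I {i} (x, y)) = f (x(i := y i))" by simp
    qed
    also have "\<dots> = (\<integral>y. f (x(i:=y)) \<partial>M i)"
      by (rule product_integral_singleton[OF m])
    finally show ?thesis .
  qed
  show ?thesis using iffD1[OF Bochner_Integration.integrable_cong[OF refl eqx] intf] .
qed

definition WOK :: "real \<Rightarrow> ('n \<Rightarrow> real \<Rightarrow> real) \<Rightarrow> bool" where
  "WOK c w \<longleftrightarrow> c \<ge> 0 \<and> (\<forall>j. integrable lborel (w j) \<and> w j \<in> borel_measurable borel \<and> (\<forall>s. c < \<bar>s\<bar> \<longrightarrow> w j s = 0))"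

definition sumS :: "'n::finite set \<Rightarrow> ('n \<Rightarrow> real) \<Rightarrow> real^'n" where
  "sumS S x = (\<Sum>j\<in>S. x j *\<^sub>R axis j 1)"

definition Ival :: "'n::finite set \<Rightarrow> ('n \<Rightarrow> real \<Rightarrow> real) \<Rightarrow> (real^'n \<Rightarrow> real) \<Rightarrow> real^'n \<Rightarrow> real" where
  "Ival S w Q z = (\<integral>x. (\<Prod>j\<in>S. w j (x j)) * Q (z + sumS S x) \<partial>Pi\<^sub>M S (\<lambda>_. lborel))"

lemma sumS_meas: "sumS S \<in> borel_measurable (Pi\<^sub>M S (\<lambda>_::'n::finite. lborel))"
  unfolding sumS_def
  by (rule borel_measurable_sum) (auto intro!: borel_measurable_scaleR measurable_component_singleton)

lemma norm_sumS:
  fixes S :: "'n::finite set"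
  shows "c \<ge> 0 \<Longrightarrow> (\<And>j. j \<in> S \<Longrightarrow> \<bar>x j\<bar> \<le> c) \<Longrightarrow> norm (sumS S x) \<le> real CARD('n::finite) * c"
proof -
  assume c0: "c \<ge> 0" and a: "\<And>j. j \<in> S \<Longrightarrow> \<bar>x j\<bar> \<le> c"
  have "norm (sumS S x) \<le> (\<Sum>j\<in>S. norm (x j *\<^sub>R axis j (1::real)))"
    unfolding sumS_def by (rule norm_sum)
  also have "\<dots> = (\<Sum>j\<in>S. \<bar>x j\<bar>)" by simp
  also have "\<dots> \<le> real (card S) * c" using sum_bounded_above[of S "\<lambda>j. \<bar>x j\<bar>" c] a by simp
  also have "\<dots> \<le> real CARD('n) * c"
  proof (cases "S = {}")
    case False
    then obtain j where "j \<in> S" by auto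
    then have "c \<ge> 0" using a[of j] by linarith
    moreover have "card S \<le> CARD('n)" by (rule card_mono) simp_all
    ultimately show ?thesis by (intro mult_right_mono) auto
  qed (use c0 in \<open>simp\<close>)
  finally show ?thesis .
qed

lemma Ival_int:
  fixes S :: "'n::finite set"
  assumes W: "WOK c w" and Q: "continuous_on UNIV Q"
  shows "integrable (Pi\<^sub>M S (\<lambda>_. lborel)) (\<lambda>x. (\<Prod>j\<in>S. w j (x j)) * Q (z + sumS S x))"
proof -
  note Qm = borel_measurable_continuous_onI[OF Q]
  obtain C where C: "\<And>v. v \<in> cball z (real CARD('n) * c) \<Longrightarrow> \<bar>Q v\<bar> \<le> C"
    using cont_bounded_on[OF Q, of "cball z (real CARD('n) * c)"] by auto
  show ?thesis
  proof (rule int_bound[where C=C])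
    show "integrable (Pi\<^sub>M S (\<lambda>_. lborel)) (\<lambda>x. \<Prod>j\<in>S. w j (x j))"
      using W by (intro PL.product_integrable_prod) (auto simp: WOK_def)
    show "(\<lambda>x. Q (z + sumS S x)) \<in> borel_measurable (Pi\<^sub>M S (\<lambda>_. lborel))"
      by (rule measurable_compose[OF _ Qm]) (intro borel_measurable_add sumS_meas borel_measurable_const)
    fix x assume "(\<Prod>j\<in>S. w j (x j)) \<noteq> 0"
    then have "\<And>j. j \<in> S \<Longrightarrow> w j (x j) \<noteq> 0" by auto
    then have "\<And>j. j \<in> S \<Longrightarrow> \<bar>x j\<bar> \<le> c" using W by (force simp: WOK_def)
    then have "norm (sumS S x) \<le> real CARD('n) * c" using W by (intro norm_sumS) (auto simp: WOK_def)
    then have "z + sumS S x \<in> cball z (real CARD('n) * c)" by (simp add: dist_norm)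
    then show "\<bar>Q (z + sumS S x)\<bar> \<le> C" by (rule C)
  qed
qed

lemma sumS_insert: "i \<notin> S \<Longrightarrow> sumS (insert i S) (x(i:=y)) = sumS S x + y *\<^sub>R axis i 1"
proof -
  assume i: "i \<notin> S"
  have "sumS S (x(i:=y)) = sumS S x" unfolding sumS_def using i by (intro sum.cong) auto
  moreover have "sumS (insert i S) (x(i:=y)) = (x(i:=y)) i *\<^sub>R axis i 1 + sumS S (x(i:=y))"
    unfolding sumS_def using i by (simp add: sum.insert)
  ultimately show ?thesis by (metis add.commute fun_upd_same)
qed

lemma Ival_insert:
  assumes W: "WOK c w" and Q: "continuous_on UNIV Q" and i: "i \<notin> S"
  shows "Ival (insert i S) w Q z = (\<integral>x. (\<Prod>j\<in>S. w j (x j)) * (\<integral>s. w i s * Q (z + sumS S x + s *\<^sub>R axis i 1) \<partial>lborel) \<partial>Pi\<^sub>M S (\<lambda>_. lborel))"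
    and "integrable (Pi\<^sub>M S (\<lambda>_. lborel)) (\<lambda>x. (\<Prod>j\<in>S. w j (x j)) * (\<integral>s. w i s * Q (z + sumS S x + s *\<^sub>R axis i 1) \<partial>lborel))"
proof -
  have fS: "finite S" by simp
  note int = Ival_int[OF W Q, of "insert i S" z]
  have pt: "(\<Prod>j\<in>insert i S. w j ((x(i:=y)) j)) * Q (z + sumS (insert i S) (x(i:=y)))
      = (\<Prod>j\<in>S. w j (x j)) * (w i y * Q (z + sumS S x + y *\<^sub>R axis i 1))" for x y
  proof -
    have "(\<Prod>j\<in>S. w j ((x(i:=y)) j)) = (\<Prod>j\<in>S. w j (x j))" using i by (intro prod.cong) auto
    moreover have "(\<Prod>j\<in>insert i S. w j ((x(i:=y)) j)) = w i y * (\<Prod>j\<in>S. w j ((x(i:=y)) j))"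
      using i by (simp add: prod.insert)
    moreover have "z + sumS (insert i S) (x(i:=y)) = z + sumS S x + y *\<^sub>R axis i 1"
      using sumS_insert[OF i, of x y] by (metis add.assoc)
    ultimately show ?thesis by (simp only: mult_ac)
  qed
  have eq: "(\<integral>y. (\<Prod>j\<in>insert i S. w j ((x(i:=y)) j)) * Q (z + sumS (insert i S) (x(i:=y))) \<partial>lborel)
       = (\<Prod>j\<in>S. w j (x j)) * (\<integral>s. w i s * Q (z + sumS S x + s *\<^sub>R axis i 1) \<partial>lborel)" for x
    by (simp only: pt integral_mult_right_zero)
  show "Ival (insert i S) w Q z = (\<integral>x. (\<Prod>j\<in>S. w j (x j)) * (\<integral>s. w i s * Q (z + sumS S x + s *\<^sub>R axis i 1) \<partial>lborel) \<partial>Pi\<^sub>M S (\<lambda>_. lborel))"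
    unfolding Ival_def PL.product_integral_insert[OF fS i int] eq ..
  show "integrable (Pi\<^sub>M S (\<lambda>_. lborel)) (\<lambda>x. (\<Prod>j\<in>S. w j (x j)) * (\<integral>s. w i s * Q (z + sumS S x + s *\<^sub>R axis i 1) \<partial>lborel))"
    using PL.product_integrable_insert'[OF fS i int] unfolding eq .
qed


(* ---- part T5 ---- *)


lemma Ival_empty:
  fixes w :: "'n::finite \<Rightarrow> real \<Rightarrow> real"
  shows "Ival {} w Q z = Q z"
proof -
  have one: "(\<integral>x. 1 \<partial>Pi\<^sub>M ({}::'n set) (\<lambda>_. lborel :: real measure)) = (1::real)"
    using PL.product_integral_prod[of "{}" "\<lambda>_ _. 1::real"] by simp
  have "Ival {} w Q z = (\<integral>x. 1 * Q z \<partial>Pi\<^sub>M ({}::'n set) (\<lambda>_. lborel :: real measure))"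
    by (simp add: Ival_def sumS_def)
  also have "\<dots> = Q z" by (simp only: integral_mult_left_zero one)
  finally show ?thesis .
qed

lemma Ival_triv_step:
  assumes W: "WOK c w" and Q: "continuous_on UNIV Q" and i: "i \<notin> S"
    and w1: "(\<integral>s. w i s \<partial>lborel) = 1" and inv: "\<And>v s. Q (v + s *\<^sub>R axis i 1) = Q v"
  shows "Ival (insert i S) w Q z = Ival S w Q z"
proof -
  have e: "(\<integral>s. w i s * Q (v + s *\<^sub>R axis i 1) \<partial>lborel) = Q v" for v
    using w1 by (simp add: inv)
  have "Ival (insert i S) w Q z = (\<integral>x. (\<Prod>j\<in>S. w j (x j)) * (\<integral>s. w i s * Q (z + sumS S x + s *\<^sub>R axis i 1) \<partial>lborel) \<partial>Pi\<^sub>M S (\<lambda>_. lborel))"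
    by (rule Ival_insert(1)[OF W Q i])
  also have "\<dots> = Ival S w Q z" by (simp only: e Ival_def)
  finally show ?thesis .
qed

lemma Ival_drop:
  assumes W: "WOK c w" and Q: "continuous_on UNIV Q"
    and T: "T \<inter> S = {}"
    and w1: "\<And>i. i \<in> T \<Longrightarrow> (\<integral>s. w i s \<partial>lborel) = 1"
    and inv: "\<And>i v s. i \<in> T \<Longrightarrow> Q (v + s *\<^sub>R axis i 1) = Q v"
  shows "Ival (S \<union> T) w Q z = Ival S w Q z"
proof -
  have "finite T" by simp
  then show ?thesis using T w1 inv
  proof (induction T rule: finite_induct)
    case empty then show ?case by simp
  next
    case (insert i T)
    have "Ival (S \<union> insert i T) w Q z = Ival (insert i (S \<union> T)) w Q z" by simp
    also have "\<dots> = Ival (S \<union> T) w Q z"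
      by (rule Ival_triv_step[OF W Q]) (use insert in auto)
    also have "\<dots> = Ival S w Q z" by (rule insert.IH) (use insert in auto)
    finally show ?case .
  qed
qed

lemma Ival_cong: "(\<And>j. j \<in> S \<Longrightarrow> w j = w' j) \<Longrightarrow> Ival S w Q z = Ival S w' Q z"
  unfolding Ival_def by (intro Bochner_Integration.integral_cong refl arg_cong2[where f="(*)"] prod.cong) auto

lemma Ival_step_bound:
  assumes W: "WOK c w" and Q: "continuous_on UNIV Q" and i: "i \<notin> S"
    and D: "\<And>v. \<bar>(\<integral>s. w i s * Q (v + s *\<^sub>R axis i 1) \<partial>lborel) - Q v\<bar> \<le> D"
  shows "\<bar>Ival (insert i S) w Q z - Q z\<bar> \<le> (\<Prod>j\<in>S. \<integral>s. \<bar>w j s\<bar> \<partial>lborel) * D + \<bar>Ival S w Q z - Q z\<bar>"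
proof -
  define P where "P x = (\<Prod>j\<in>S. w j (x j))" for x
  define Q1 where "Q1 v = (\<integral>s. w i s * Q (v + s *\<^sub>R axis i 1) \<partial>lborel)" for v
  have e1: "Ival (insert i S) w Q z = (\<integral>x. P x * Q1 (z + sumS S x) \<partial>Pi\<^sub>M S (\<lambda>_. lborel))"
    unfolding P_def Q1_def by (rule Ival_insert(1)[OF W Q i])
  have i1: "integrable (Pi\<^sub>M S (\<lambda>_. lborel)) (\<lambda>x. P x * Q1 (z + sumS S x))"
    unfolding P_def Q1_def by (rule Ival_insert(2)[OF W Q i])
  have e2: "Ival S w Q z = (\<integral>x. P x * Q (z + sumS S x) \<partial>Pi\<^sub>M S (\<lambda>_. lborel))"
    unfolding P_def Ival_def ..
  have i2: "integrable (Pi\<^sub>M S (\<lambda>_. lborel)) (\<lambda>x. P x * Q (z + sumS S x))"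
    unfolding P_def by (rule Ival_int[OF W Q])
  have iP: "integrable (Pi\<^sub>M S (\<lambda>_. lborel)) (\<lambda>x. (\<Prod>j\<in>S. \<bar>w j (x j)\<bar>))"
    using W by (intro PL.product_integrable_prod) (auto simp: WOK_def)
  have "Ival (insert i S) w Q z - Ival S w Q z = (\<integral>x. P x * Q1 (z + sumS S x) - P x * Q (z + sumS S x) \<partial>Pi\<^sub>M S (\<lambda>_. lborel))"
    unfolding e1 e2 using i1 i2 by (rule Bochner_Integration.integral_diff[symmetric])
  also have "\<bar>\<dots>\<bar> \<le> (\<integral>x. (\<Prod>j\<in>S. \<bar>w j (x j)\<bar>) * D \<partial>Pi\<^sub>M S (\<lambda>_. lborel))"
  proof (rule abs_integral_le)
    show "integrable (Pi\<^sub>M S (\<lambda>_. lborel)) (\<lambda>x. (\<Prod>j\<in>S. \<bar>w j (x j)\<bar>) * D)"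
      using iP by simp
    fix x
    have "\<bar>P x * Q1 (z + sumS S x) - P x * Q (z + sumS S x)\<bar> = \<bar>P x\<bar> * \<bar>Q1 (z + sumS S x) - Q (z + sumS S x)\<bar>"
      by (simp add: right_diff_distrib[symmetric] abs_mult)
    also have "\<dots> \<le> \<bar>P x\<bar> * D" using D unfolding Q1_def by (intro mult_left_mono) auto
    also have "\<bar>P x\<bar> = (\<Prod>j\<in>S. \<bar>w j (x j)\<bar>)" by (simp add: P_def abs_prod)
    finally show "\<bar>P x * Q1 (z + sumS S x) - P x * Q (z + sumS S x)\<bar> \<le> (\<Prod>j\<in>S. \<bar>w j (x j)\<bar>) * D" .
  qed
  also have "\<dots> = (\<Prod>j\<in>S. \<integral>s. \<bar>w j s\<bar> \<partial>lborel) * D"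
  proof -
    have "(\<integral>x. (\<Prod>j\<in>S. \<bar>w j (x j)\<bar>) \<partial>Pi\<^sub>M S (\<lambda>_. lborel)) = (\<Prod>j\<in>S. \<integral>s. \<bar>w j s\<bar> \<partial>lborel)"
      using PL.product_integral_prod[of S "\<lambda>j s. \<bar>w j s\<bar>"] W by (simp add: WOK_def)
    then show ?thesis by simp
  qed
  finally have "\<bar>Ival (insert i S) w Q z - Ival S w Q z\<bar> \<le> (\<Prod>j\<in>S. \<integral>s. \<bar>w j s\<bar> \<partial>lborel) * D" .
  then show ?thesis by linarith
qed

lemma Ival_bound:
  assumes W: "WOK c w" and Q: "continuous_on UNIV Q"
    and D: "\<And>i v. i \<in> S \<Longrightarrow> \<bar>(\<integral>s. w i s * Q (v + s *\<^sub>R axis i 1) \<partial>lborel) - Q v\<bar> \<le> N * E i"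
    and N: "\<And>j. j \<in> S \<Longrightarrow> (\<integral>s. \<bar>w j s\<bar> \<partial>lborel) = N" and N1: "N \<ge> 1"
    and E: "\<And>i. i \<in> S \<Longrightarrow> E i \<ge> 0"
  shows "\<bar>Ival S w Q z - Q z\<bar> \<le> N ^ card S * (\<Sum>i\<in>S. E i)"
proof -
  have "finite S" by simp
  then show ?thesis using D N E
  proof (induction S rule: finite_induct)
    case empty then show ?case by (simp add: Ival_empty)
  next
    case (insert i F)
    have "\<bar>Ival (insert i F) w Q z - Q z\<bar> \<le> (\<Prod>j\<in>F. \<integral>s. \<bar>w j s\<bar> \<partial>lborel) * (N * E i) + \<bar>Ival F w Q z - Q z\<bar>"
      by (rule Ival_step_bound[OF W Q insert(2)]) (use insert in auto)
    also have "(\<Prod>j\<in>F. \<integral>s. \<bar>w j s\<bar> \<partial>lborel) = N ^ card F"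
      using insert by simp
    also have "\<bar>Ival F w Q z - Q z\<bar> \<le> N ^ card F * (\<Sum>i\<in>F. E i)"
      by (rule insert.IH) (use insert in auto)
    also have "N ^ card F * (N * E i) + N ^ card F * (\<Sum>i\<in>F. E i) \<le> N ^ card (insert i F) * (\<Sum>i\<in>insert i F. E i)"
    proof -
      have s0: "(\<Sum>i\<in>F. E i) \<ge> 0" using insert by (intro sum_nonneg) auto
      have "N ^ card F \<le> N ^ Suc (card F)" using N1 by (intro power_increasing) auto
      then have "N ^ card F * (\<Sum>i\<in>F. E i) \<le> N ^ Suc (card F) * (\<Sum>i\<in>F. E i)"
        using s0 by (intro mult_right_mono) auto
      then show ?thesis using insert by (simp add: algebra_simps)
    qed
    finally show ?case by simp
  qed
qed


(* ---- part T6 ---- *)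


definition wA :: "(real \<Rightarrow> real) \<Rightarrow> 'n set \<Rightarrow> ('n \<Rightarrow> real) \<Rightarrow> 'n \<Rightarrow> real \<Rightarrow> real" where
  "wA g A h j = (if j \<in> A then gs g (h j) else g)"

lemma wA_facts:
  assumes G: "assumption_G g ell" and hp: "\<And>j. 0 < h j" and hm: "\<And>j. h j \<le> hmax"
  shows wA_WOK: "WOK (max (1/2) hmax) (wA g A h)"
    and wA_int1: "(\<integral>s. wA g A h j s \<partial>lborel) = 1"
    and wA_l1: "(\<integral>s. \<bar>wA g A h j s\<bar> \<partial>lborel) = l1norm g"
proof -
  have i1: "integrable lborel (wA g A h j)" for j
    using GS_int_pow[OF G hp, of j 0] G_int_pow[OF G, of 0] by (simp add: wA_def)
  have m1: "wA g A h j \<in> borel_measurable borel" for j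
    using GS_meas[OF G hp] G_meas[OF G] by (simp add: wA_def)
  have z1: "wA g A h j s = 0" if "max (1/2) hmax < \<bar>s\<bar>" for j s
  proof (cases "j \<in> A")
    case True
    have "h j / 2 < \<bar>s\<bar>" using that hm[of j] hp[of j] by auto
    then show ?thesis using GS_zero[OF G hp] True by (simp add: wA_def)
  next
    case False
    have "s \<notin> {-1/2..1/2}" using that by auto
    then show ?thesis using G_zero[OF G] False by (simp add: wA_def)
  qed
  show "WOK (max (1/2) hmax) (wA g A h)"
    unfolding WOK_def using i1 m1 z1 by auto
  show "(\<integral>s. wA g A h j s \<partial>lborel) = 1"
    using GS_int1[OF G hp] G_int1[OF G] by (simp add: wA_def)
  show "(\<integral>s. \<bar>wA g A h j s\<bar> \<partial>lborel) = l1norm g"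
    using GS_l1[OF G hp] G_l1[OF G] by (simp add: wA_def)
qed

lemma vecP_sumS: "vecP = sumS UNIV"
  by (simp add: vecP_def[abs_def] sumS_def[abs_def])

lemma Gih_wA: "Gih g A h (vecP x) = (\<Prod>j\<in>UNIV. wA g A h j (x j))"
proof -
  have "(\<Prod>j\<in>UNIV. wA g A h j (x j)) = (\<Prod>j\<in>UNIV. if j \<in> A then gs g (h j) (x j) else g (x j))"
    by (intro prod.cong) (auto simp: wA_def)
  also have "\<dots> = (\<Prod>j\<in>UNIV \<inter> {j. j \<in> A}. gs g (h j) (x j)) * (\<Prod>j\<in>UNIV \<inter> - {j. j \<in> A}. g (x j))"
    by (rule prod.If_cases) simp
  also have "\<dots> = Gih g A h (vecP x)"
    by (simp add: Gih_def gs_def Diff_eq Collect_mem_eq)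
  finally show ?thesis ..
qed

lemma G0_wA: "G0 g (vecP x) = (\<Prod>j\<in>UNIV. wA g {} h j (x j))"
  by (simp add: G0_def wA_def)

lemma vec_nth_meas[measurable]: "(\<lambda>w::real^'n::finite. w $ j) \<in> borel_measurable borel"
  by (rule borel_measurable_continuous_onI) (intro continuous_intros)

lemma QB_cont:
  assumes "holder_ball B \<beta> L f"
  shows "continuous_on UNIV (\<lambda>v. f (projB B v))"
  by (rule continuous_on_compose2[OF hol_cont[OF assms] projB_cont]) (auto simp: projB_Vsub)


lemma projE_projB: "projE A E t = projB A (transpose E *v t)"
  by (simp only: projE_def projB_def)

lemma lell_lemma:
  assumes "finite P" "B \<in> P"
  shows "nat (\<lceil>\<beta>i B\<rceil> - 1) \<le> Max ((\<lambda>A. nat \<lfloor>\<beta>i A\<rfloor>) ` P)"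
proof -
  have "\<lceil>\<beta>i B\<rceil> - 1 \<le> \<lfloor>\<beta>i B\<rfloor>" using ceiling_diff_floor_le_1[of "\<beta>i B"] by linarith
  then have "nat (\<lceil>\<beta>i B\<rceil> - 1) \<le> nat \<lfloor>\<beta>i B\<rfloor>" by (rule nat_mono)
  also have "\<dots> \<le> Max ((\<lambda>A. nat \<lfloor>\<beta>i A\<rfloor>) ` P)" using assms by (intro Max_ge) auto
  finally show ?thesis .
qed

theorem lemma4:
  fixes P :: "'n::finite set set" and E :: "real^'n^'n"
    and \<eta> L \<beta> hmin hmax :: real and \<beta>i :: "'n set \<Rightarrow> real"
    and f :: "'n set \<Rightarrow> real^'n \<Rightarrow> real" and F :: "real^'n \<Rightarrow> real"
    and g :: "real \<Rightarrow> real" and h :: "'n \<Rightarrow> real"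
  assumes part: "partition_on UNIV P"
    and eta: "\<eta> > 0" and unit: "\<forall>j. norm (column j E) = 1" and detE: "\<bar>det E\<bar> \<ge> \<eta>"
    and beta: "\<forall>A\<in>P. \<beta>i A / real (card A) = \<beta>"
    and hol: "\<forall>A\<in>P. holder_ball A (\<beta>i A) L (f A)"
    and F: "F = (\<lambda>t. \<Sum>A\<in>P. f A (projE A E t))"
    and G: "assumption_G g (Max ((\<lambda>A. nat \<lfloor>\<beta>i A\<rfloor>) ` P))"
    and h: "0 < hmin" "hmin \<le> hmax" "\<forall>j. h j \<in> {hmin..hmax}"
  shows "\<forall>x\<in>D0. \<bar>bias g P E h F x\<bar>
           \<le> L * (\<Sum>A\<in>P. l1norm g ^ card A * (\<Sum>j\<in>A. h j powr \<beta>i A))"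
proof
  fix x :: "real^'n" assume "x \<in> D0"
  define ell where "ell = Max ((\<lambda>A. nat \<lfloor>\<beta>i A\<rfloor>) ` P)"
  have G': "assumption_G g ell" using G by (simp add: ell_def)
  have finP: "finite P" by simp
  have disj: "\<And>A B. A \<in> P \<Longrightarrow> B \<in> P \<Longrightarrow> A \<noteq> B \<Longrightarrow> A \<inter> B = {}"
    using part by (auto simp: partition_on_def disjoint_def)
  have hp: "\<And>j. 0 < h j" using h by (meson atLeastAtMost_iff less_le_trans)
  have hm: "\<And>j. h j \<le> hmax" using h by auto
  define c where "c = max (1/2) hmax"
  have W: "\<And>A. WOK c (wA g A h)" unfolding c_def by (rule wA_WOK[OF G' hp hm])
  have w1: "\<And>A j. (\<integral>s. wA g A h j s \<partial>lborel) = 1" by (rule wA_int1[OF G' hp hm])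
  define A0 where "A0 = transpose E"
  define y where "y = A0 *v x"
  have dE: "det E \<noteq> 0" using detE eta by auto
  have dA0: "det A0 = det E" by (simp add: A0_def det_transpose)
  define QB where "QB B v = f B (projB B v)" for B v
  have QBc: "\<And>B. B \<in> P \<Longrightarrow> continuous_on UNIV (QB B)"
    unfolding QB_def using QB_cont hol by blast
  have QBm: "\<And>B. B \<in> P \<Longrightarrow> QB B \<in> borel_measurable borel"
    by (rule borel_measurable_continuous_onI[OF QBc])
  define Phi where "Phi u = (\<Sum>A\<in>P. Gih g A h u) - (real (card P) - 1) * G0 g u" for u
  define Psi where "Psi w = Phi (w - y) * (\<Sum>B\<in>P. QB B w)" for w
  have Kt: "Ktheta g P E h (t - x) * F t = \<bar>det E\<bar> * Psi (A0 *v t)" for t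
  proof -
    have e: "transpose E *v (t - x) = A0 *v t - y" by (simp only: A0_def y_def matrix_vector_mult_diff_distrib)
    have Fe: "F t = (\<Sum>B\<in>P. QB B (A0 *v t))" unfolding F QB_def projE_projB A0_def ..
    have "Ktheta g P E h (t - x) = \<bar>det E\<bar> * Phi (A0 *v t - y)"
      unfolding Ktheta_def e Phi_def by (simp add: algebra_simps)
    then show ?thesis unfolding Fe Psi_def by simp
  qed
  define Theta where "Theta x' = (\<Sum>B\<in>P. (\<Sum>A\<in>P. (\<Prod>j\<in>UNIV. wA g A h j (x' j)) * QB B (y + sumS UNIV x'))
       - (real (card P) - 1) * ((\<Prod>j\<in>UNIV. wA g {} h j (x' j)) * QB B (y + sumS UNIV x')))" for x'
  have PsiTheta: "Psi (y + vecP x') = Theta x'" for x'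
  proof -
    define p where "p A = (\<Prod>j\<in>UNIV. wA g A h j (x' j))" for A
    define q where "q B = QB B (y + sumS UNIV x')" for B
    define k where "k = real (card P) - 1"
    have "Psi (y + vecP x') = ((\<Sum>A\<in>P. p A) - k * p {}) * (\<Sum>B\<in>P. q B)"
      by (simp only: Psi_def Phi_def add_diff_cancel_left' Gih_wA G0_wA[of g _ h]) (simp add: p_def q_def k_def vecP_sumS)
    also have "\<dots> = (\<Sum>B\<in>P. (\<Sum>A\<in>P. p A * q B) - k * (p {} * q B))"
      by (simp add: sum_distrib_left sum_distrib_right algebra_simps sum_subtractf)
    also have "\<dots> = Theta x'" by (simp add: Theta_def p_def q_def k_def)
    finally show ?thesis .
  qed
  have intI: "\<And>A B. B \<in> P \<Longrightarrow> integrable (Pi\<^sub>M UNIV (\<lambda>_. lborel)) (\<lambda>x'. (\<Prod>j\<in>UNIV. wA g A h j (x' j)) * QB B (y + sumS UNIV x'))"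
    by (rule Ival_int[OF W QBc])
  have intTh: "integrable (Pi\<^sub>M UNIV (\<lambda>_. lborel)) Theta"
    unfolding Theta_def
    by (intro Bochner_Integration.integrable_sum Bochner_Integration.integrable_diff integrable_mult_right intI) auto
  have valTh: "(\<integral>x'. Theta x' \<partial>Pi\<^sub>M UNIV (\<lambda>_. lborel)) = (\<Sum>B\<in>P. (\<Sum>A\<in>P. Ival UNIV (wA g A h) (QB B) y) - (real (card P) - 1) * Ival UNIV (wA g {} h) (QB B) y)"
  proof -
    have "(\<integral>x'. Theta x' \<partial>Pi\<^sub>M UNIV (\<lambda>_. lborel)) = (\<Sum>B\<in>P. (\<integral>x'. (\<Sum>A\<in>P. (\<Prod>j\<in>UNIV. wA g A h j (x' j)) * QB B (y + sumS UNIV x'))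
       - (real (card P) - 1) * ((\<Prod>j\<in>UNIV. wA g {} h j (x' j)) * QB B (y + sumS UNIV x')) \<partial>Pi\<^sub>M UNIV (\<lambda>_. lborel)))"
      unfolding Theta_def
      by (rule Bochner_Integration.integral_sum)
         (intro Bochner_Integration.integrable_sum Bochner_Integration.integrable_diff integrable_mult_right intI; simp)
    also have "\<dots> = (\<Sum>B\<in>P. (\<Sum>A\<in>P. Ival UNIV (wA g A h) (QB B) y) - (real (card P) - 1) * Ival UNIV (wA g {} h) (QB B) y)"
    proof (rule sum.cong[OF refl])
      fix B assume B: "B \<in> P"
      have "(\<integral>x'. (\<Sum>A\<in>P. (\<Prod>j\<in>UNIV. wA g A h j (x' j)) * QB B (y + sumS UNIV x'))
       - (real (card P) - 1) * ((\<Prod>j\<in>UNIV. wA g {} h j (x' j)) * QB B (y + sumS UNIV x')) \<partial>Pi\<^sub>M UNIV (\<lambda>_. lborel))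
        = (\<integral>x'. (\<Sum>A\<in>P. (\<Prod>j\<in>UNIV. wA g A h j (x' j)) * QB B (y + sumS UNIV x')) \<partial>Pi\<^sub>M UNIV (\<lambda>_. lborel))
         - (\<integral>x'. (real (card P) - 1) * ((\<Prod>j\<in>UNIV. wA g {} h j (x' j)) * QB B (y + sumS UNIV x')) \<partial>Pi\<^sub>M UNIV (\<lambda>_. lborel))"
        by (rule Bochner_Integration.integral_diff) (use intI[OF B] in auto)
      also have "\<dots> = (\<Sum>A\<in>P. Ival UNIV (wA g A h) (QB B) y) - (real (card P) - 1) * Ival UNIV (wA g {} h) (QB B) y"
        unfolding Ival_def
        by (subst Bochner_Integration.integral_sum) (use intI[OF B] in auto)
      finally show "(\<integral>x'. (\<Sum>A\<in>P. (\<Prod>j\<in>UNIV. wA g A h j (x' j)) * QB B (y + sumS UNIV x'))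
       - (real (card P) - 1) * ((\<Prod>j\<in>UNIV. wA g {} h j (x' j)) * QB B (y + sumS UNIV x')) \<partial>Pi\<^sub>M UNIV (\<lambda>_. lborel))
        = (\<Sum>A\<in>P. Ival UNIV (wA g A h) (QB B) y) - (real (card P) - 1) * Ival UNIV (wA g {} h) (QB B) y" .
    qed
    finally show ?thesis .
  qed
  have Phim: "Phi \<in> borel_measurable borel"
  proof -
    note gm[measurable] = G_meas[OF G']
    show ?thesis unfolding Phi_def[abs_def] Gih_def[abs_def] G0_def[abs_def] by measurable
  qed
  have Psim: "Psi \<in> borel_measurable borel"
    unfolding Psi_def[abs_def]
  proof (intro borel_measurable_times borel_measurable_sum)
    show "(\<lambda>w. Phi (w - y)) \<in> borel_measurable borel"
      using Phim by measurable
    show "\<And>B. B \<in> P \<Longrightarrow> QB B \<in> borel_measurable borel" by (rule QBm)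
  qed
  have Psiy_m: "(\<lambda>u. Psi (y + u)) \<in> borel_measurable borel" using Psim by measurable
  have intPi: "integrable (Pi\<^sub>M UNIV (\<lambda>_. lborel)) (\<lambda>x'. Psi (y + vecP x'))"
    using intTh by (simp add: PsiTheta)
  have intPsiy: "integrable lborel (\<lambda>u. Psi (y + u))"
    using integrable_distr_eq[OF vecP_meas Psiy_m] intPi unfolding lborel_PiM by simp
  have valPsiy: "(\<integral>u. Psi (y + u) \<partial>lborel) = (\<integral>x'. Theta x' \<partial>Pi\<^sub>M UNIV (\<lambda>_. lborel))"
    using integral_distr[OF vecP_meas Psiy_m] unfolding lborel_PiM by (simp add: PsiTheta)
  have ym: "(\<lambda>u. y + u) \<in> measurable lborel (borel :: (real^'n) measure)" by simp
  have dp: "distr lborel borel (\<lambda>u. y + u) = (lborel :: (real^'n) measure)"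
    using lborel_distr_plus[of y] by simp
  have intPsi: "integrable lborel Psi"
    using integrable_distr_eq[OF ym Psim] intPsiy unfolding dp by simp
  have valPsi: "(\<integral>w. Psi w \<partial>lborel) = (\<integral>u. Psi (y + u) \<partial>lborel)"
    using integral_distr[OF ym Psim] unfolding dp by simp
  have dA0': "det A0 \<noteq> 0" using dE dA0 by simp
  from cov_lin[OF dA0' Psim intPsi]
  have cov: "integrable lborel (\<lambda>t. Psi (A0 *v t))" "(\<integral>t. Psi (A0 *v t) \<partial>lborel) * \<bar>det E\<bar> = (\<integral>w. Psi w \<partial>lborel)"
    using dA0 by auto
  have intK: "integral UNIV (\<lambda>t. Ktheta g P E h (t - x) * F t) = (\<integral>x'. Theta x' \<partial>Pi\<^sub>M UNIV (\<lambda>_. lborel))"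
  proof -
    have "integral UNIV (\<lambda>t. Ktheta g P E h (t - x) * F t) = integral UNIV (\<lambda>t. \<bar>det E\<bar> * Psi (A0 *v t))"
      by (simp only: Kt)
    also have "\<dots> = (\<integral>t. \<bar>det E\<bar> * Psi (A0 *v t) \<partial>lborel)"
      by (rule integral_lborel) (use cov(1) in simp)
    also have "\<dots> = (\<integral>w. Psi w \<partial>lborel)" using cov(2) by (simp add: mult.commute)
    finally show ?thesis using valPsi valPsiy by simp
  qed
  have Fx: "F x = (\<Sum>B\<in>P. QB B y)"
    unfolding F QB_def projE_projB A0_def y_def ..
  text \<open>Per-block facts\<close>
  have drop: "Ival UNIV (wA g A h) (QB B) y = Ival B (wA g A h) (QB B) y" if B: "B \<in> P" for A B
  proof -
    have "Ival (B \<union> (UNIV - B)) (wA g A h) (QB B) y = Ival B (wA g A h) (QB B) y"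
      by (rule Ival_drop[OF W QBc[OF B]]) (auto simp: w1 QB_def projB_out)
    moreover have "B \<union> (UNIV - B) = UNIV" by auto
    ultimately show ?thesis by simp
  qed
  have other: "Ival UNIV (wA g A h) (QB B) y = Ival UNIV (wA g {} h) (QB B) y"
    if B: "B \<in> P" and A: "A \<in> P" "A \<noteq> B" for A B
  proof -
    have "Ival B (wA g A h) (QB B) y = Ival B (wA g {} h) (QB B) y"
      by (rule Ival_cong) (use disj[OF A(1) B A(2)] in \<open>auto simp: wA_def fun_eq_iff\<close>)
    then show ?thesis using drop[OF B] by simp
  qed
  have bnd: "\<bar>Ival UNIV (wA g B h) (QB B) y - QB B y\<bar> \<le> l1norm g ^ card B * (L * (\<Sum>j\<in>B. h j powr \<beta>i B))"
    if B: "B \<in> P" for B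
  proof -
    have holB: "holder_ball B (\<beta>i B) L (f B)" using hol B by blast
    have lell: "nat (\<lceil>\<beta>i B\<rceil> - 1) \<le> ell" unfolding ell_def by (rule lell_lemma[OF finP B])
    have "\<bar>Ival B (wA g B h) (QB B) y - QB B y\<bar> \<le> l1norm g ^ card B * (\<Sum>i\<in>B. L * h i powr \<beta>i B)"
    proof (rule Ival_bound[OF W QBc[OF B]])
      fix i v assume i: "i \<in> B"
      show "\<bar>(\<integral>s. wA g B h i s * QB B (v + s *\<^sub>R axis i 1) \<partial>lborel) - QB B v\<bar> \<le> l1norm g * (L * h i powr \<beta>i B)"
        using taylor_step(2)[OF holB i hp G' lell, where v=v] i by (simp add: wA_def QB_def)
    next
      show "\<And>j. (\<integral>s. \<bar>wA g B h j s\<bar> \<partial>lborel) = l1norm g" by (rule wA_l1[OF G' hp hm])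
      show "1 \<le> l1norm g" by (rule G_l1_ge1[OF G'])
      show "\<And>i. 0 \<le> L * h i powr \<beta>i B" using hol_L[OF holB] by simp
    qed
    then show ?thesis using drop[OF B] by (simp add: sum_distrib_left)
  qed
  have sumA: "(\<Sum>A\<in>P. Ival UNIV (wA g A h) (QB B) y) - (real (card P) - 1) * Ival UNIV (wA g {} h) (QB B) y
      = Ival UNIV (wA g B h) (QB B) y" if B: "B \<in> P" for B
  proof -
    have "(\<Sum>A\<in>P. Ival UNIV (wA g A h) (QB B) y) = Ival UNIV (wA g B h) (QB B) y + (\<Sum>A\<in>P - {B}. Ival UNIV (wA g A h) (QB B) y)"
      using B finP by (simp add: sum.remove)
    also have "(\<Sum>A\<in>P - {B}. Ival UNIV (wA g A h) (QB B) y) = (\<Sum>A\<in>P - {B}. Ival UNIV (wA g {} h) (QB B) y)"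
      using other[OF B] by (intro sum.cong) auto
    also have "\<dots> = real (card P - 1) * Ival UNIV (wA g {} h) (QB B) y" using B by simp
    also have "real (card P - 1) = real (card P) - 1"
    proof -
      have "card P \<ge> 1" using B finP by (metis One_nat_def Suc_leI card_gt_0_iff empty_iff)
      then show ?thesis by (simp add: of_nat_diff)
    qed
    finally show ?thesis by simp
  qed
  have "bias g P E h F x = (\<Sum>B\<in>P. Ival UNIV (wA g B h) (QB B) y - QB B y)"
    unfolding bias_def intK valTh Fx by (simp add: sumA sum_subtractf)
  also have "\<bar>\<dots>\<bar> \<le> (\<Sum>B\<in>P. \<bar>Ival UNIV (wA g B h) (QB B) y - QB B y\<bar>)" by (rule sum_abs)
  also have "\<dots> \<le> (\<Sum>B\<in>P. l1norm g ^ card B * (L * (\<Sum>j\<in>B. h j powr \<beta>i B)))"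
    by (rule sum_mono) (rule bnd)
  also have "\<dots> = L * (\<Sum>A\<in>P. l1norm g ^ card A * (\<Sum>j\<in>A. h j powr \<beta>i A))"
    by (simp add: sum_distrib_left mult.left_commute)
  finally show "\<bar>bias g P E h F x\<bar> \<le> L * (\<Sum>A\<in>P. l1norm g ^ card A * (\<Sum>j\<in>A. h j powr \<beta>i A))" .
qed


end
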